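(* Let $\mathcal{F},G:\mathbb{R}^p\times\mathbb{R}^q\to\mathbb{R}$ satisfy the standing assumptions (A1) and (A2) with constants $L>0$ and $M<\infty$, and fix $\delta>0$ and $\xi\in(0,1)$. Suppose the learning-rate sequences $(\eta_w^{(t)})_{t\ge1}$, $(\eta_\alpha^{(t)})_{t\ge1}$ are positive and satisfy $$\sum_{t=1}^\infty\eta_\alpha^{(t)}<\infty,\qquad \sum_{t=1}^\infty\eta_w^{(t)}=\infty,\qquad \sum_{t=1}^\infty\big(\eta_w^{(t)}\big)^2<\infty,$$ $$\eta_\alpha^{(t)}<\eta_w^{(t)}<\min\Big(\frac{1-\xi}{L},1\Big)\quad\text{for all }t\ge1.$$ Let $(w^t,\alpha^t)_{t\ge1}$ be generated by the EBOMLC iteration from an arbitrary initial point. Then $$\lim_{t\to\infty}\big\|\nabla_w\mathcal{F}(w^t,\alpha^t)\big\|=0.$$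
   Context: Notation: $\|\cdot\|$ is the Euclidean norm; for a function $\Phi(w,\alpha)$ of $(w,\alpha)\in\mathbb{R}^p\times\mathbb{R}^q$, $\nabla\Phi=(\nabla_w\Phi,\nabla_\alpha\Phi)$ denotes the full gradient in the joint variable. Standing assumptions. (A1) $\mathcal{F}$ and $G$ are differentiable on $\mathbb{R}^p\times\mathbb{R}^q$ and $\nabla\mathcal{F}$, $\nabla G$ are $L$-Lipschitz with respect to the joint variable $(w,\alpha)$, for some $L>0$. (A2) There is a finite $M$ such that for all $(w,\alpha)$: $|\mathcal{F}(w,\alpha)|\le M$, $|G(w,\alpha)|\le M$, $\|\nabla\mathcal{F}(w,\alpha)\|\le M$, $\|\nabla G(w,\alpha)\|\le M$. EBOMLC iteration. Fix constants $\delta>0$, $\xi\in(0,1)$ and positive learning rates $\eta_w^{(t)},\eta_\alpha^{(t)}$. Given $(w^t,\alpha^t)$, set $w^t_{(1)}=w^t-\eta_w^{(t)}\nabla_wG(w^t,\alpha^t)$ and define $\mathcal{Q}_t(w,\alpha)=G(w,\alpha)-G(w^t_{(1)},\alpha)$, where $w^t_{(1)}$ is treated as a constant when differentiating, so that $$\nabla\mathcal{Q}(w^t,\alpha^t):=\nabla G(w^t,\alpha^t)-\nabla G(w^t_{(1)},\alpha^t),$$ with components $\nabla_w\mathcal{Q},\nabla_\alpha\mathcal{Q}$. Define $$\bar\beta_t=\max\Big(\delta-\frac{\nabla_w\mathcal{F}(w^t,\alpha^t)^T\nabla_w\mathcal{Q}(w^t,\alpha^t)}{\|\nabla\mathcal{Q}(w^t,\alpha^t)\|^2},\,0\Big)$$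 if $\nabla\mathcal{Q}(w^t,\alpha^t)\neq0$, and $\bar\beta_t=0$ otherwise. Then update $$w^{t+1}=w^t-\eta_w^{(t)}\big(\nabla_w\mathcal{F}(w^t,\alpha^t)+\xi\bar\beta_t\nabla_w\mathcal{Q}(w^t,\alpha^t)\big),$$ $$\alpha^{t+1}=\alpha^t-\eta_\alpha^{(t)}\big(\nabla_\alpha\mathcal{F}(w^t,\alpha^t)+\xi\bar\beta_t\nabla_\alpha\mathcal{Q}(w^t,\alpha^t)\big).$$ *)

theory Defs
  imports "HOL-Analysis.Analysis"
begin

text \<open>Joint variable (w, alpha) lives in the product type 'w \<times> 'a (Euclidean norm on the product).\<close>

definition has_gradient_everywhere ::
  "(('w::euclidean_space) \<times> ('a::euclidean_space) \<Rightarrow> real) \<Rightarrow> ('w \<times> 'a \<Rightarrow> 'w \<times> 'a) \<Rightarrow> bool" where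
  "has_gradient_everywhere f gf \<longleftrightarrow> (\<forall>x. (f has_derivative (\<lambda>h. gf x \<bullet> h)) (at x))"

text \<open>Gradient of Q_t at (w^t, alpha^t): grad G (w,alpha) - grad G (w_(1), alpha),
  with w_(1) = w - eta_w * grad_w G (w,alpha).\<close>
definition gradQ ::
  "('w::euclidean_space \<times> 'a::euclidean_space \<Rightarrow> 'w \<times> 'a) \<Rightarrow> real \<Rightarrow> 'w \<times> 'a \<Rightarrow> 'w \<times> 'a" where
  "gradQ gG eta_w x = gG x - gG (fst x - eta_w *\<^sub>R fst (gG x), snd x)"

definition beta_bar ::
  "real \<Rightarrow> ('w::euclidean_space \<times> 'a::euclidean_space \<Rightarrow> 'w \<times> 'a) \<Rightarrow> ('w \<times> 'a \<Rightarrow> 'w \<times> 'a)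
    \<Rightarrow> real \<Rightarrow> 'w \<times> 'a \<Rightarrow> real" where
  "beta_bar \<delta> gF gG eta_w x =
     (let q = gradQ gG eta_w x in
      if q = 0 then 0
      else max (\<delta> - (fst (gF x) \<bullet> fst q) / (norm q)\<^sup>2) 0)"

definition ebomlc_step ::
  "real \<Rightarrow> real \<Rightarrow> ('w::euclidean_space \<times> 'a::euclidean_space \<Rightarrow> 'w \<times> 'a) \<Rightarrow> ('w \<times> 'a \<Rightarrow> 'w \<times> 'a)
    \<Rightarrow> real \<Rightarrow> real \<Rightarrow> 'w \<times> 'a \<Rightarrow> 'w \<times> 'a" where
  "ebomlc_step \<delta> \<xi> gF gG eta_w eta_a x =
     (let q = gradQ gG eta_w x; b = beta_bar \<delta> gF gG eta_w x in
      (fst x - eta_w *\<^sub>R (fst (gF x) + (\<xi> * b) *\<^sub>R fst q),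
       snd x - eta_a *\<^sub>R (snd (gF x) + (\<xi> * b) *\<^sub>R snd q)))"

end

theory Submission
  imports Defs
begin


lemma descent:
  fixes F :: "'v::real_inner \<Rightarrow> real"
  assumes der: "\<And>x. (F has_derivative (\<lambda>h. gF x \<bullet> h)) (at x)"
    and lip: "\<forall>u v. norm (gF u - gF v) \<le> L * norm (u - v)"
  shows "F y \<le> F x + gF x \<bullet> (y - x) + L * (norm (y - x))\<^sup>2"
proof (cases "y = x")
  case True then show ?thesis by simp
next
  case False
  define h where "h = y - x"
  define \<phi> where "\<phi> s = F (x + s *\<^sub>R h)" for s :: real
  have d: "DERIV \<phi> s :> gF (x + s *\<^sub>R h) \<bullet> h" for s
  proof -
    have l: "((\<lambda>s. x + s *\<^sub>R h) has_derivative (\<lambda>t. t *\<^sub>R h)) (at s)"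
      by (auto intro!: derivative_eq_intros)
    have "((\<lambda>s. F (x + s *\<^sub>R h)) has_derivative (\<lambda>t. gF (x + s *\<^sub>R h) \<bullet> (t *\<^sub>R h))) (at s)"
      using has_derivative_compose[OF l der] by simp
    moreover have "(\<lambda>t. gF (x + s *\<^sub>R h) \<bullet> (t *\<^sub>R h)) = (*) (gF (x + s *\<^sub>R h) \<bullet> h)"
      by (auto simp: mult.commute)
    ultimately show ?thesis unfolding \<phi>_def has_field_derivative_def by simp
  qed
  obtain z where z: "0 < z" "z < 1" "\<phi> 1 - \<phi> 0 = (1 - 0) * (gF (x + z *\<^sub>R h) \<bullet> h)"
    using MVT2[of 0 1 \<phi> "\<lambda>s. gF (x + s *\<^sub>R h) \<bullet> h"] d by auto
  have "gF (x + z *\<^sub>R h) \<bullet> h - gF x \<bullet> h = (gF (x + z *\<^sub>R h) - gF x) \<bullet> h"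
    by (simp add: inner_diff_left)
  also have "\<dots> \<le> norm (gF (x + z *\<^sub>R h) - gF x) * norm h"
    by (rule Cauchy_Schwarz_ineq2[THEN abs_le_D1])
  also have "\<dots> \<le> L * norm (z *\<^sub>R h) * norm h"
    using lip[rule_format, of "x + z *\<^sub>R h" x] by (intro mult_right_mono) auto
  also have "\<dots> \<le> L * norm h * norm h"
  proof -
    have hp: "norm h > 0" using False h_def by simp
    have "0 \<le> L * norm h" using lip[rule_format, of "x+h" x] norm_ge_zero[of "gF (x + h) - gF x"]
      by (simp del: norm_ge_zero)
    then have "L \<ge> 0" using hp by (simp add: zero_le_mult_iff)
    moreover have "z * norm h \<le> norm h" using z mult_right_mono[of z 1 "norm h"] by simp
    ultimately show ?thesis using z by (auto intro!: mult_right_mono mult_left_mono)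
  qed
  finally show ?thesis using z(3) unfolding \<phi>_def h_def by (simp add: power2_eq_square)
qed


lemma step_bounds:
  fixes gF gG :: "('w::euclidean_space) \<times> ('a::euclidean_space) \<Rightarrow> 'w \<times> 'a"
  assumes lipG: "\<forall>u v. norm (gG u - gG v) \<le> L * norm (u - v)"
    and bF: "\<forall>u. norm (gF u) \<le> M" and bG: "\<forall>u. norm (gG u) \<le> M"
    and dp: "\<delta> > 0" and xi: "0 < \<xi>" "\<xi> < 1"
    and ea: "0 < a" "a \<le> e" and Lp: "L > 0"
  shows "norm (ebomlc_step \<delta> \<xi> gF gG e a p - p) \<le> 2 * e * (2*M + 2*\<delta>*M)"
    and "gF p \<bullet> (ebomlc_step \<delta> \<xi> gF gG e a p - p) \<le>
           - (1 - \<xi>) * e * (norm (fst (gF p)))\<^sup>2 + e\<^sup>2 * (\<delta> * L * M\<^sup>2) + a * (M * (2*M + 2*\<delta>*M))"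
proof -
  define q where "q = gradQ gG e p"
  define b where "b = beta_bar \<delta> gF gG e p"
  define g where "g = fst (gF p)"
  define B where "B = 2*M + 2*\<delta>*M"
  define d where "d = (g + (\<xi> * b) *\<^sub>R fst q, snd (gF p) + (\<xi> * b) *\<^sub>R snd q)"
  have M0: "M \<ge> 0" using bF norm_ge_zero order_trans by blast
  have s: "ebomlc_step \<delta> \<xi> gF gG e a p - p = (- (e *\<^sub>R fst d), - (a *\<^sub>R snd d))"
    unfolding ebomlc_step_def d_def q_def b_def g_def Let_def by (simp add: prod_eq_iff)
  have gM: "norm g \<le> M" using bF norm_fst_le[of "fst (gF p)" "snd (gF p)"] g_def
    by (metis order_trans prod.collapse)
  have gaM: "norm (snd (gF p)) \<le> M" using bF norm_snd_le[of "snd (gF p)" "fst (gF p)"]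
    by (metis order_trans prod.collapse)
  have nfq: "norm (fst q) \<le> norm q" using norm_fst_le[of "fst q" "snd q"] by simp
  have nsq: "norm (snd q) \<le> norm q" using norm_snd_le[of "snd q" "fst q"] by simp
  have qdiff: "p - (fst p - e *\<^sub>R fst (gG p), snd p) = (e *\<^sub>R fst (gG p), 0)"
    by (simp add: prod_eq_iff)
  have "norm q \<le> L * norm (p - (fst p - e *\<^sub>R fst (gG p), snd p))"
    unfolding q_def gradQ_def using lipG by blast
  also have "norm (p - (fst p - e *\<^sub>R fst (gG p), snd p)) = e * norm (fst (gG p))"
    using qdiff ea by (simp add: norm_Pair)
  finally have q1: "norm q \<le> L * (e * norm (fst (gG p)))" .
  have "norm (fst (gG p)) \<le> M" using bG norm_fst_le[of "fst (gG p)" "snd (gG p)"]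
    by (metis order_trans prod.collapse)
  then have q1': "norm q \<le> L * e * M"
  proof -
    have "L \<ge> 0" using Lp by simp
    with \<open>norm (fst (gG p)) \<le> M\<close> q1 ea show ?thesis
      by (smt (verit, ccfv_SIG) mult_left_mono mult.assoc)
  qed
  have q2: "norm q \<le> 2 * M"
  proof -
    have "norm q \<le> norm (gG p) + norm (gG (fst p - e *\<^sub>R fst (gG p), snd p))"
      unfolding q_def gradQ_def by (rule norm_triangle_ineq4)
    then show ?thesis using bG by (smt (verit))
  qed
  have b0: "b \<ge> 0" unfolding b_def beta_bar_def Let_def by simp
  have b1: "b * norm q \<le> \<delta> * norm q + norm g"
  proof (cases "q = 0")
    case True then show ?thesis by simp
  next
    case False
    have bq: "b = max (\<delta> - (g \<bullet> fst q) / (norm q)\<^sup>2) 0"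
      unfolding b_def beta_bar_def Let_def g_def q_def[symmetric] using False by simp
    show ?thesis
    proof (cases "\<delta> - (g \<bullet> fst q) / (norm q)\<^sup>2 \<le> 0")
      case True then show ?thesis using bq dp by simp
    next
      case F2: False
      then have bq2: "b = \<delta> - (g \<bullet> fst q) / (norm q)\<^sup>2" using bq by simp
      have np: "norm q > 0" using False by simp
      have "b * norm q = \<delta> * norm q - (g \<bullet> fst q) / norm q"
        using np unfolding bq2 by (simp add: field_simps power2_eq_square)
      also have "- (g \<bullet> fst q) / norm q \<le> norm g"
      proof -
        have "- (g \<bullet> fst q) \<le> norm g * norm q"
          using Cauchy_Schwarz_ineq2[of g "fst q"] nfq
          by (smt (verit) mult_left_mono norm_ge_zero)
        then have "(- (g \<bullet> fst q)) / norm q \<le> (norm g * norm q) / norm q"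
          using np by (intro divide_right_mono) auto
        then show ?thesis using np by simp
      qed
      then have "\<delta> * norm q - (g \<bullet> fst q) / norm q \<le> \<delta> * norm q + norm g" by simp
      finally show ?thesis .
    qed
  qed
  have bq: "\<xi> * b * norm q \<le> 2 * \<delta> * M + M"
  proof -
    have "\<xi> * b * norm q \<le> b * norm q" using xi b0 by (simp add: mult_left_le_one_le mult.assoc)
    also have "\<dots> \<le> \<delta> * (2*M) + M" using b1 q2 gM dp by (smt (verit) mult_left_mono)
    finally show ?thesis by simp
  qed
  have nd1: "norm (fst d) \<le> B"
  proof -
    have "norm (fst d) \<le> norm g + norm ((\<xi> * b) *\<^sub>R fst q)" unfolding d_def
      using norm_triangle_ineq by (simp only: fst_conv snd_conv)
    also have "norm ((\<xi> * b) *\<^sub>R fst q) \<le> \<xi> * b * norm q"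
      using xi b0 nfq by (simp add: mult_left_mono)
    finally show ?thesis using gM bq B_def by simp
  qed
  have nd2: "norm (snd d) \<le> B"
  proof -
    have "norm (snd d) \<le> norm (snd (gF p)) + norm ((\<xi> * b) *\<^sub>R snd q)" unfolding d_def
      using norm_triangle_ineq by (simp only: fst_conv snd_conv)
    also have "norm ((\<xi> * b) *\<^sub>R snd q) \<le> \<xi> * b * norm q"
      using xi b0 nsq by (simp add: mult_left_mono)
    finally show ?thesis using gaM bq B_def by simp
  qed
  have "norm (ebomlc_step \<delta> \<xi> gF gG e a p - p) \<le> norm (e *\<^sub>R fst d) + norm (a *\<^sub>R snd d)"
    unfolding s using norm_Pair_le[of "- (e *\<^sub>R fst d)" "- (a *\<^sub>R snd d)"] by simp
  also have "\<dots> \<le> e * B + e * B"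
  proof -
    have B0: "B \<ge> 0" using nd1 norm_ge_zero order_trans by blast
    have "norm (e *\<^sub>R fst d) = e * norm (fst d)" using ea by simp
    also have "\<dots> \<le> e * B" using ea nd1 by (simp add: mult_left_mono)
    finally have 1: "norm (e *\<^sub>R fst d) \<le> e * B" .
    have "norm (a *\<^sub>R snd d) = a * norm (snd d)" using ea by simp
    also have "\<dots> \<le> a * B" using ea nd2 by (simp add: mult_left_mono)
    also have "\<dots> \<le> e * B" using ea B0 by (simp add: mult_right_mono)
    finally have 2: "norm (a *\<^sub>R snd d) \<le> e * B" .
    show ?thesis using add_mono[OF 1 2] .
  qed
  finally show "norm (ebomlc_step \<delta> \<xi> gF gG e a p - p) \<le> 2 * e * (2*M + 2*\<delta>*M)"
    unfolding B_def by simp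
  have inner1: "g \<bullet> fst d \<ge> (1 - \<xi>) * (norm g)\<^sup>2 - \<delta> * norm g * norm q"
  proof (cases "b = 0")
    case True
    then have "g \<bullet> fst d = (norm g)\<^sup>2" unfolding d_def by (simp add: power2_norm_eq_inner)
    moreover have "\<xi> * (norm g)\<^sup>2 \<ge> 0" "\<delta> * norm g * norm q \<ge> 0" using xi dp by auto
    ultimately show ?thesis by (simp add: algebra_simps)
  next
    case False
    then have qn: "q \<noteq> 0" unfolding b_def beta_bar_def Let_def q_def by auto
    then have np: "norm q > 0" by simp
    have bq: "b = max (\<delta> - (g \<bullet> fst q) / (norm q)\<^sup>2) 0"
      unfolding b_def beta_bar_def Let_def g_def q_def[symmetric] using qn by simp
    with False b0 have bq2: "b = \<delta> - (g \<bullet> fst q) / (norm q)\<^sup>2" by (simp add: max_def split: if_splits)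
    define c where "c = g \<bullet> fst q"
    have c2: "c\<^sup>2 \<le> (norm g)\<^sup>2 * (norm q)\<^sup>2"
    proof -
      have "\<bar>c\<bar> \<le> norm g * norm q" unfolding c_def
        using Cauchy_Schwarz_ineq2[of g "fst q"] nfq by (smt (verit) mult_left_mono norm_ge_zero)
      then have "\<bar>c\<bar>\<^sup>2 \<le> (norm g * norm q)\<^sup>2" by (rule power_mono) simp
      then show ?thesis by (simp add: power_mult_distrib)
    qed
    have cq: "c\<^sup>2 / (norm q)\<^sup>2 \<le> (norm g)\<^sup>2" using c2 np by (simp add: divide_le_eq)
    have cl: "c \<ge> - (norm g * norm q)" unfolding c_def
      using Cauchy_Schwarz_ineq2[of g "fst q"] nfq by (smt (verit) mult_left_mono norm_ge_zero)
    have "g \<bullet> fst d = (norm g)\<^sup>2 + \<xi> * b * c" unfolding d_def c_def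
      by (simp add: inner_add_right power2_norm_eq_inner)
    also have "\<xi> * b * c = \<xi> * \<delta> * c - \<xi> * (c\<^sup>2 / (norm q)\<^sup>2)"
      unfolding bq2 c_def by (simp add: algebra_simps power2_eq_square)
    finally have eq: "g \<bullet> fst d = (norm g)\<^sup>2 + \<xi> * \<delta> * c - \<xi> * (c\<^sup>2 / (norm q)\<^sup>2)" by simp
    have "\<xi> * (c\<^sup>2 / (norm q)\<^sup>2) \<le> \<xi> * (norm g)\<^sup>2" using mult_left_mono[OF cq, of \<xi>] xi by linarith
    moreover have "\<xi> * \<delta> * c \<ge> - (\<delta> * norm g * norm q)"
    proof -
      have X: "\<delta> * c \<ge> - (\<delta> * norm g * norm q)"
        using mult_left_mono[OF cl, of \<delta>] dp by (simp add: mult.assoc)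
      have Y: "\<delta> * norm g * norm q \<ge> 0" using dp by simp
      have "\<xi> * (\<delta> * c) \<ge> - (\<delta> * norm g * norm q)"
      proof (cases "\<delta> * c \<ge> 0")
        case True then show ?thesis using xi Y by (smt (verit) mult_nonneg_nonneg)
      next
        case False
        then have "(1 - \<xi>) * (\<delta> * c) \<le> 0" using xi mult_nonneg_nonpos[of "1 - \<xi>" "\<delta> * c"] by linarith
        then show ?thesis using X by (simp add: algebra_simps)
      qed
      then show ?thesis by (simp add: mult.assoc)
    qed
    ultimately show ?thesis using eq by (simp add: algebra_simps)
  qed
  have E: "gF p \<bullet> (ebomlc_step \<delta> \<xi> gF gG e a p - p) = - e * (g \<bullet> fst d) - a * (snd (gF p) \<bullet> snd d)"
    unfolding s g_def by (simp add: inner_prod_def)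
  have T1: "- e * (g \<bullet> fst d) \<le> - e * ((1 - \<xi>) * (norm g)\<^sup>2 - \<delta> * norm g * norm q)"
    using inner1 ea by simp
  have T2: "- a * (snd (gF p) \<bullet> snd d) \<le> a * (M * B)"
  proof -
    have "- (snd (gF p) \<bullet> snd d) \<le> norm (snd (gF p)) * norm (snd d)"
      using Cauchy_Schwarz_ineq2[of "snd (gF p)" "snd d"] by simp
    also have "\<dots> \<le> M * B" using gaM nd2 M0 by (simp add: mult_mono)
    finally have "a * (- (snd (gF p) \<bullet> snd d)) \<le> a * (M * B)" using ea by (intro mult_left_mono) auto
    then show ?thesis by simp
  qed
  have "\<delta> * norm g * norm q \<le> \<delta> * M * (L * e * M)"
    using mult_mono[OF gM q1' M0 norm_ge_zero] dp by (simp add: mult.assoc)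
  then have "e * (\<delta> * norm g * norm q) \<le> e * (\<delta> * M * (L * e * M))"
    using ea by (intro mult_left_mono) auto
  then have T3: "- e * ((1 - \<xi>) * (norm g)\<^sup>2 - \<delta> * norm g * norm q) \<le> - (1 - \<xi>) * e * (norm g)\<^sup>2 + e\<^sup>2 * (\<delta> * L * M\<^sup>2)"
    by (simp add: algebra_simps power2_eq_square)
  show "gF p \<bullet> (ebomlc_step \<delta> \<xi> gF gG e a p - p) \<le>
           - (1 - \<xi>) * e * (norm (fst (gF p)))\<^sup>2 + e\<^sup>2 * (\<delta> * L * M\<^sup>2) + a * (M * (2*M + 2*\<delta>*M))"
    using E T1 T2 T3 unfolding B_def g_def by linarith
qed


lemma cube_diff:
  fixes v w h :: real
  assumes "0 \<le> v" "0 \<le> w" "\<bar>w - v\<bar> \<le> h"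
  shows "\<bar>w^3 - v^3\<bar> \<le> h * (6 * v\<^sup>2 + 6 * h\<^sup>2)"
proof -
  have eq: "w^3 - v^3 = (w - v) * (w\<^sup>2 + w * v + v\<^sup>2)" by (simp add: algebra_simps power2_eq_square power3_eq_cube)
  have h0: "h \<ge> 0" using assms(3) by linarith
  have wl: "w \<le> v + h" using assms(3) by linarith
  have s0: "w\<^sup>2 + w * v + v\<^sup>2 \<ge> 0" using assms by simp
  have "w\<^sup>2 \<le> (v+h)\<^sup>2" using wl assms by (simp add: power_mono)
  moreover have "w * v \<le> (v+h) * v" using wl assms by (simp add: mult_right_mono)
  moreover have "(v+h)\<^sup>2 \<le> 2* v\<^sup>2 + 2*h\<^sup>2"
    using sum_squares_ge_zero[of "v - h" 0] by (simp add: power2_eq_square algebra_simps)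
  moreover have "(v+h) * v \<le> 2* v\<^sup>2 + 2*h\<^sup>2"
  proof -
    have "0 \<le> (v - h)\<^sup>2" by simp
    then have "2 * (h * v) \<le> h\<^sup>2 + v\<^sup>2" by (simp add: power2_eq_square algebra_simps)
    moreover have "0 \<le> h\<^sup>2" "0 \<le> v\<^sup>2" by simp_all
    moreover have "(v+h) * v = v\<^sup>2 + h * v" by (simp add: power2_eq_square algebra_simps)
    ultimately show ?thesis by linarith
  qed
  moreover have "0 \<le> h\<^sup>2" "0 \<le> v\<^sup>2" by simp_all
  ultimately have S: "w\<^sup>2 + w * v + v\<^sup>2 \<le> 6 * v\<^sup>2 + 6 * h\<^sup>2" by linarith
  have "\<bar>w^3 - v^3\<bar> = \<bar>w - v\<bar> * (w\<^sup>2 + w * v + v\<^sup>2)" using eq s0 by (simp add: abs_mult)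
  also have "\<dots> \<le> h * (6 * v\<^sup>2 + 6 * h\<^sup>2)" using assms(3) S s0 h0 by (intro mult_mono) auto
  finally show ?thesis .
qed

lemma endgame:
  fixes u e :: "nat \<Rightarrow> real"
  assumes u0: "\<And>n. u n \<ge> 0" and uM: "\<And>n. u n \<le> M"
    and e0: "\<And>n. 0 < e n" and e1: "\<And>n. e n < 1"
    and S: "summable (\<lambda>n. e n * (u n)\<^sup>2)" and e2: "summable (\<lambda>n. (e n)\<^sup>2)"
    and D: "filterlim (\<lambda>n. \<Sum>k<n. e k) at_top sequentially"
    and K: "K \<ge> 0" "\<And>n. \<bar>u (Suc n) - u n\<bar> \<le> K * e n"
  shows "u \<longlonglongrightarrow> 0"
proof -
  define Dl where "Dl n = u (Suc n) ^ 3 - u n ^ 3" for n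
  have Db: "norm (Dl n) \<le> 6 * K * (e n * (u n)\<^sup>2) + 6 * K^3 * (e n)\<^sup>2" for n
  proof -
    have "\<bar>Dl n\<bar> \<le> K * e n * (6 * (u n)\<^sup>2 + 6 * (K * e n)\<^sup>2)"
      unfolding Dl_def by (rule cube_diff) (use u0 K in auto)
    also have "\<dots> = 6 * K * (e n * (u n)\<^sup>2) + 6 * K^3 * (e n)^3"
      by (simp add: algebra_simps power2_eq_square power3_eq_cube)
    also have "(e n)^3 \<le> (e n)\<^sup>2"
    proof -
      have "(e n)\<^sup>2 * e n \<le> (e n)\<^sup>2 * 1" using e1[of n] by (intro mult_left_mono) auto
      moreover have "(e n)^3 = (e n)\<^sup>2 * e n" by (simp add: power2_eq_square power3_eq_cube)
      ultimately show ?thesis by simp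
    qed
    then have "6 * K^3 * (e n)^3 \<le> 6 * K^3 * (e n)\<^sup>2" using K by (intro mult_left_mono) auto
    finally show ?thesis by simp
  qed
  have SD: "summable Dl"
    by (rule summable_comparison_test[OF _ summable_add[OF summable_mult[OF S] summable_mult[OF e2]]])
       (use Db in auto)
  have tel: "u n ^ 3 = u 0 ^ 3 + (\<Sum>k<n. Dl k)" for n
    unfolding Dl_def using sum_lessThan_telescope[of "\<lambda>k. u k ^ 3" n] by simp
  have cube_lim: "(\<lambda>n. u n ^ 3) \<longlonglongrightarrow> u 0 ^ 3 + suminf Dl"
  proof -
    have fe: "(\<lambda>n. u n ^ 3) = (\<lambda>n. u 0 ^ 3 + (\<Sum>k<n. Dl k))" using tel by (rule ext)
    show ?thesis unfolding fe by (intro tendsto_add tendsto_const summable_LIMSEQ SD)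
  qed
  define l where "l = u 0 ^ 3 + suminf Dl"
  have l0: "l \<ge> 0" using cube_lim u0 unfolding l_def
    by (intro LIMSEQ_le_const[OF cube_lim]) auto
  have "l = 0"
  proof (rule ccontr)
    assume "l \<noteq> 0"
    then have lp: "l > 0" using l0 by simp
    have ev: "eventually (\<lambda>n. u n ^ 3 > l / 2) sequentially"
      using cube_lim lp unfolding l_def[symmetric] by (intro order_tendstoD(1)) auto
    then obtain N where N: "\<And>n. n \<ge> N \<Longrightarrow> u n ^ 3 > l / 2"
      by (auto simp: eventually_at_top_linorder)
    have Mp: "M > 0"
    proof -
      have "u N \<noteq> 0"
      proof
        assume "u N = 0"
        then have "u N ^ 3 = 0" by simp
        with N[of N] lp show False by simp
      qed
      then have "u N > 0" using u0[of N] by simp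
      then show ?thesis using uM[of N] by simp
    qed
    have bnd: "norm (e n) \<le> (2 * M / l) * (e n * (u n)\<^sup>2)" if "n \<ge> N" for n
    proof -
      have "u n * (u n)\<^sup>2 \<le> M * (u n)\<^sup>2" using uM[of n] by (intro mult_right_mono) auto
      moreover have "u n ^ 3 = u n * (u n)\<^sup>2" by (simp add: power2_eq_square power3_eq_cube)
      ultimately have "u n ^ 3 \<le> M * (u n)\<^sup>2" by simp
      then have "l / 2 < M * (u n)\<^sup>2" using N[OF that] by simp
      then have "l / (2 * M) < (u n)\<^sup>2" using Mp by (simp add: field_simps)
      then have "1 < (2 * M / l) * (u n)\<^sup>2" using lp Mp by (simp add: field_simps)
      then have "e n * 1 \<le> e n * ((2 * M / l) * (u n)\<^sup>2)" using e0[of n]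
        by (intro mult_left_mono) auto
      moreover have "e n * ((2 * M / l) * (u n)\<^sup>2) = (2 * M / l) * (e n * (u n)\<^sup>2)" by simp
      moreover have "norm (e n) = e n * 1" using e0[of n] by simp
      ultimately show ?thesis by linarith
    qed
    have se: "summable e"
      by (rule summable_comparison_test[OF _ summable_mult[OF S]]) (use bnd in blast)
    have "eventually (\<lambda>n. (\<Sum>k<n. e k) \<ge> suminf e + 1) sequentially"
      using D by (simp add: filterlim_at_top)
    then obtain n where "(\<Sum>k<n. e k) \<ge> suminf e + 1" by (auto simp: eventually_at_top_linorder)
    moreover have "(\<Sum>k<n. e k) \<le> suminf e"
      using se e0 by (intro sum_le_suminf) (auto intro: less_imp_le)
    ultimately show False by simp
  qed
  then have "(\<lambda>n. root 3 (u n ^ 3)) \<longlonglongrightarrow> root 3 0"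
    using cube_lim unfolding l_def[symmetric] by (intro tendsto_real_root) simp
  then show ?thesis using u0 by (simp add: real_root_power_cancel)
qed

theorem theorem2:
  fixes F G :: "('w::euclidean_space) \<times> ('a::euclidean_space) \<Rightarrow> real"
    and gF gG :: "'w \<times> 'a \<Rightarrow> 'w \<times> 'a"
    and L M \<delta> \<xi> :: real
    and eta_w eta_a :: "nat \<Rightarrow> real"
    and x :: "nat \<Rightarrow> 'w \<times> 'a"
  assumes gradF: "has_gradient_everywhere F gF"
    and gradG: "has_gradient_everywhere G gG"
    and L_pos: "L > 0"
    and lipF: "\<forall>u v. norm (gF u - gF v) \<le> L * norm (u - v)"
    and lipG: "\<forall>u v. norm (gG u - gG v) \<le> L * norm (u - v)"
    and bounds: "\<forall>u. \<bar>F u\<bar> \<le> M \<and> \<bar>G u\<bar> \<le> M \<and> norm (gF u) \<le> M \<and> norm (gG u) \<le> M"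
    and delta_pos: "\<delta> > 0"
    and xi: "0 < \<xi>" "\<xi> < 1"
    and eta_pos: "\<forall>t\<ge>1. eta_w t > 0 \<and> eta_a t > 0"
    and sum_a: "summable (\<lambda>t. eta_a (t + 1))"
    and sum_w_div: "filterlim (\<lambda>n. \<Sum>t=1..n. eta_w t) at_top sequentially"
    and sum_w_sq: "summable (\<lambda>t. (eta_w (t + 1))\<^sup>2)"
    and eta_order: "\<forall>t\<ge>1. eta_a t < eta_w t \<and> eta_w t < min ((1 - \<xi>) / L) 1"
    and iter: "\<forall>t\<ge>1. x (Suc t) = ebomlc_step \<delta> \<xi> gF gG (eta_w t) (eta_a t) (x t)"
  shows "(\<lambda>t. norm (fst (gF (x t)))) \<longlonglongrightarrow> 0"
proof -
  define y where "y n = x (Suc n)" for n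
  define e where "e n = eta_w (Suc n)" for n
  define a where "a n = eta_a (Suc n)" for n
  define B where "B = 2*M + 2*\<delta>*M"
  define u where "u n = norm (fst (gF (y n)))" for n
  have e0: "0 < e n" and a0: "0 < a n" and ae: "a n < e n" and e1: "e n < 1" for n
    using eta_pos[rule_format, of "Suc n"] eta_order[rule_format, of "Suc n"]
    unfolding e_def a_def by auto
  have hy: "y (Suc n) = ebomlc_step \<delta> \<xi> gF gG (e n) (a n) (y n)" for n
    using iter[rule_format, of "Suc n"] unfolding y_def e_def a_def by simp
  have bF: "\<forall>u. norm (gF u) \<le> M" and bG: "\<forall>u. norm (gG u) \<le> M" and bFF: "\<And>u. \<bar>F u\<bar> \<le> M"
    using bounds by auto
  have M0: "M \<ge> 0" using bFF[of undefined] by simp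
  have B0: "B \<ge> 0" unfolding B_def using M0 delta_pos by simp
  have st1: "norm (y (Suc n) - y n) \<le> 2 * e n * B" for n
    unfolding hy B_def
    by (rule step_bounds(1)[OF lipG bF bG delta_pos xi _ _ L_pos]) (use a0 ae in \<open>auto intro: less_imp_le\<close>)
  have st2: "gF (y n) \<bullet> (y (Suc n) - y n) \<le>
      - (1 - \<xi>) * e n * (u n)\<^sup>2 + (e n)\<^sup>2 * (\<delta> * L * M\<^sup>2) + a n * (M * B)" for n
    unfolding hy B_def u_def
    by (rule step_bounds(2)[OF lipG bF bG delta_pos xi _ _ L_pos]) (use a0 ae in \<open>auto intro: less_imp_le\<close>)
  have der: "\<And>p. (F has_derivative (\<lambda>h. gF p \<bullet> h)) (at p)"
    using gradF unfolding has_gradient_everywhere_def by blast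
  define r where "r n = (e n)\<^sup>2 * (\<delta> * L * M\<^sup>2) + a n * (M * B) + L * (4 * B\<^sup>2) * (e n)\<^sup>2" for n
  have desc: "(1 - \<xi>) * e n * (u n)\<^sup>2 \<le> F (y n) - F (y (Suc n)) + r n" for n
  proof -
    have 1: "F (y (Suc n)) \<le> F (y n) + gF (y n) \<bullet> (y (Suc n) - y n) + L * (norm (y (Suc n) - y n))\<^sup>2"
      by (rule descent[OF der lipF])
    have "(norm (y (Suc n) - y n))\<^sup>2 \<le> (2 * e n * B)\<^sup>2"
      using st1[of n] by (intro power_mono) auto
    then have 2: "L * (norm (y (Suc n) - y n))\<^sup>2 \<le> L * (4 * B\<^sup>2) * (e n)\<^sup>2"
      using L_pos by (simp add: power_mult_distrib algebra_simps)
    show ?thesis using 1 2 st2[of n] unfolding r_def by linarith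
  qed
  have e2: "summable (\<lambda>n. (e n)\<^sup>2)" using sum_w_sq unfolding e_def by simp
  have sa: "summable a" using sum_a unfolding a_def by simp
  have sr: "summable r" unfolding r_def
    by (intro summable_add summable_mult2 summable_mult e2 sa)
  have r0: "r n \<ge> 0" for n
      proof -
    have 1: "(e n)\<^sup>2 * (\<delta> * L * M\<^sup>2) \<ge> 0"
      using delta_pos L_pos by (intro mult_nonneg_nonneg) auto
    have 2: "a n * (M * B) \<ge> 0" using a0[of n] M0 B0 by (intro mult_nonneg_nonneg) auto
    have 3: "L * (4 * B\<^sup>2) * (e n)\<^sup>2 \<ge> 0" using L_pos by (intro mult_nonneg_nonneg) auto
    show ?thesis unfolding r_def using 1 2 3 by linarith
  qed
  have c0: "(1 - \<xi>) * e n * (u n)\<^sup>2 \<ge> 0" for n using xi e0[of n] by simp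
  have sc: "summable (\<lambda>n. (1 - \<xi>) * e n * (u n)\<^sup>2)"
  proof (rule summableI_nonneg_bounded[OF c0])
    fix N
    have "(\<Sum>n<N. (1 - \<xi>) * e n * (u n)\<^sup>2) \<le> (\<Sum>n<N. F (y n) - F (y (Suc n)) + r n)"
      by (rule sum_mono) (rule desc)
    also have "\<dots> = F (y 0) - F (y N) + (\<Sum>n<N. r n)"
      using sum_lessThan_telescope'[of "\<lambda>n. F (y n)" N] by (simp add: sum.distrib)
    also have "\<dots> \<le> 2 * M + suminf r"
    proof -
      have "(\<Sum>n<N. r n) \<le> suminf r" using sum_le_suminf[OF sr, of "{..<N}"] r0 by blast
      moreover have "F (y 0) \<le> M" "- F (y N) \<le> M" using bFF[of "y 0"] bFF[of "y N"] by auto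
      ultimately show ?thesis by linarith
    qed
    finally show "(\<Sum>n<N. (1 - \<xi>) * e n * (u n)\<^sup>2) \<le> 2 * M + suminf r" .
  qed
  have S: "summable (\<lambda>n. e n * (u n)\<^sup>2)"
  proof -
    have "summable (\<lambda>n. (1 / (1 - \<xi>)) * ((1 - \<xi>) * e n * (u n)\<^sup>2))"
      by (rule summable_mult[OF sc])
    moreover have "(\<lambda>n. (1 / (1 - \<xi>)) * ((1 - \<xi>) * e n * (u n)\<^sup>2)) = (\<lambda>n. e n * (u n)\<^sup>2)"
      using xi by (auto simp: field_simps)
    ultimately show ?thesis by simp
  qed
  have Kb: "\<bar>u (Suc n) - u n\<bar> \<le> (2 * L * B) * e n" for n
  proof -
    have "\<bar>u (Suc n) - u n\<bar> \<le> norm (fst (gF (y (Suc n))) - fst (gF (y n)))"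
      unfolding u_def by (rule norm_triangle_ineq3)
    also have "\<dots> \<le> norm (gF (y (Suc n)) - gF (y n))"
    proof -
      have "norm (fst (gF (y (Suc n)) - gF (y n))) \<le> norm (gF (y (Suc n)) - gF (y n))"
        by (metis norm_fst_le prod.collapse)
      then show ?thesis by simp
    qed
    also have "\<dots> \<le> L * norm (y (Suc n) - y n)" using lipF by blast
    also have "\<dots> \<le> L * (2 * e n * B)" using st1[of n] L_pos by simp
    finally show ?thesis by (simp add: algebra_simps)
  qed
  have D: "filterlim (\<lambda>n. \<Sum>k<n. e k) at_top sequentially"
  proof -
    have "(\<Sum>t=1..n. eta_w t) = (\<Sum>k<n. e k)" for n
    proof -
      have "(\<Sum>t=1..n. eta_w t) = (\<Sum>t\<in>{Suc 0..<Suc n}. eta_w t)"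
        by (simp only: atLeastLessThanSuc_atLeastAtMost One_nat_def)
      also have "\<dots> = (\<Sum>k\<in>{0..<n}. eta_w (Suc k))" by (rule sum.shift_bounds_Suc_ivl)
      finally show ?thesis unfolding e_def by (simp only: atLeast0LessThan)
    qed
    then show ?thesis using sum_w_div by simp
  qed
  have uM: "u n \<le> M" for n
  proof -
    have "norm (fst (gF (y n))) \<le> norm (gF (y n))" by (metis norm_fst_le prod.collapse)
    then show ?thesis unfolding u_def using bF[rule_format, of "y n"] by linarith
  qed
  have "u \<longlonglongrightarrow> 0"
  proof -
    have u0: "\<And>n. u n \<ge> 0" by (simp add: u_def)
    have K0: "2 * L * B \<ge> 0" using L_pos B0 by simp
    show ?thesis by (rule endgame[OF u0 uM e0 e1 S e2 D K0 Kb])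
  qed
  then have "(\<lambda>n. norm (fst (gF (x (Suc n))))) \<longlonglongrightarrow> 0" unfolding u_def y_def .
  then show ?thesis by (rule filterlim_sequentially_Suc[THEN iffD1])
qed


end
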